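(* Let $L/K$ be a totally and tamely ramified finite Galois extension of complete local fields with finite residue fields, let $e=[L:K]$ and $G=\mathrm{Gal}(L/K)$, and let $\pi_L,\pi_K$ be uniformizers of $L,K$ with $\pi_L^e=\pi_K$. Every $\alpha\in\mathcal{O}_L$ can be written uniquely as $\alpha=u_0+u_1\pi_L+\dots+u_{e-1}\pi_L^{e-1}$ with $u_i\in\mathcal{O}_K$. For $n\in\mathbb{Z}$, $\pi_L^n\alpha$ is a free generator of $\mathfrak{P}_L^n$ over $\mathcal{O}_K[G]$ if and only if $u_i\in\mathcal{O}_K^\times$ for all $i=0,\dots,e-1$; in particular this holds for $\alpha=1+\pi_L+\dots+\pi_L^{e-1}$.
   Context: A complete local field is a field complete with respect to a non-trivial discrete valuation. Uniformizers $\pi_L,\pi_K$ with $\pi_L^e=\pi_K$ always exist in this situation. *)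

theory Defs
  imports Complex_Main
begin

text \<open>The big field L is the whole type 'a; K is a subfield given as a subset.
  v is the normalized discrete valuation of L (values on nonzero elements only).\<close>

definition normalized_dvf :: "('a::field \<Rightarrow> int) \<Rightarrow> bool" where
  "normalized_dvf v \<longleftrightarrow>
     (\<forall>x y. x \<noteq> 0 \<longrightarrow> y \<noteq> 0 \<longrightarrow> v (x * y) = v x + v y) \<and>
     (\<forall>x y. x \<noteq> 0 \<longrightarrow> y \<noteq> 0 \<longrightarrow> x + y \<noteq> 0 \<longrightarrow> v (x + y) \<ge> min (v x) (v y)) \<and>
     (\<forall>n. \<exists>x. x \<noteq> 0 \<and> v x = n)"

definition subfield :: "'a::field set \<Rightarrow> bool" where
  "subfield K \<longleftrightarrow> 0 \<in> K \<and> 1 \<in> K \<and>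
     (\<forall>x\<in>K. \<forall>y\<in>K. x + y \<in> K \<and> x - y \<in> K \<and> x * y \<in> K) \<and>
     (\<forall>x\<in>K. inverse x \<in> K)"

definition val_ring :: "('a::field \<Rightarrow> int) \<Rightarrow> 'a set \<Rightarrow> 'a set" where
  "val_ring v S = {x \<in> S. x = 0 \<or> v x \<ge> 0}"

definition max_ideal :: "('a::field \<Rightarrow> int) \<Rightarrow> 'a set \<Rightarrow> 'a set" where
  "max_ideal v S = {x \<in> S. x = 0 \<or> v x > 0}"

definition val_units :: "('a::field \<Rightarrow> int) \<Rightarrow> 'a set \<Rightarrow> 'a set" where
  "val_units v S = {x \<in> S. x \<noteq> 0 \<and> v x = 0}"

definition ideal_pow :: "('a::field \<Rightarrow> int) \<Rightarrow> int \<Rightarrow> 'a set" where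
  "ideal_pow v n = {x. x = 0 \<or> v x \<ge> n}"

definition finite_residue_field :: "('a::field \<Rightarrow> int) \<Rightarrow> 'a set \<Rightarrow> bool" where
  "finite_residue_field v S \<longleftrightarrow>
     finite (val_ring v S // {(x, y). x \<in> val_ring v S \<and> y \<in> val_ring v S \<and> x - y \<in> max_ideal v S})"

definition v_cauchy :: "('a::field \<Rightarrow> int) \<Rightarrow> (nat \<Rightarrow> 'a) \<Rightarrow> bool" where
  "v_cauchy v X \<longleftrightarrow> (\<forall>N::int. \<exists>M. \<forall>m\<ge>M. \<forall>k\<ge>M. X m = X k \<or> v (X m - X k) \<ge> N)"

definition v_converges :: "('a::field \<Rightarrow> int) \<Rightarrow> (nat \<Rightarrow> 'a) \<Rightarrow> 'a \<Rightarrow> bool" where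
  "v_converges v X l \<longleftrightarrow> (\<forall>N::int. \<exists>M. \<forall>m\<ge>M. X m = l \<or> v (X m - l) \<ge> N)"

definition v_complete :: "('a::field \<Rightarrow> int) \<Rightarrow> 'a set \<Rightarrow> bool" where
  "v_complete v S \<longleftrightarrow> (\<forall>X. (\<forall>m. X m \<in> S) \<longrightarrow> v_cauchy v X \<longrightarrow> (\<exists>l\<in>S. v_converges v X l))"

definition uniformizer :: "('a::field \<Rightarrow> int) \<Rightarrow> 'a set \<Rightarrow> 'a \<Rightarrow> bool" where
  "uniformizer v S p \<longleftrightarrow> p \<in> S \<and> p \<noteq> 0 \<and> v p > 0 \<and>
     (\<forall>x\<in>S. x \<noteq> 0 \<longrightarrow> v x > 0 \<longrightarrow> v p \<le> v x)"

definition ext_degree :: "'a::field set \<Rightarrow> nat \<Rightarrow> bool" where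
  "ext_degree K d \<longleftrightarrow> (\<exists>b::nat \<Rightarrow> 'a. \<forall>x. \<exists>!c. (\<forall>i<d. c i \<in> K) \<and> (\<forall>i\<ge>d. c i = 0) \<and>
       x = (\<Sum>i<d. c i * b i))"

definition field_aut :: "('a::field \<Rightarrow> 'a) \<Rightarrow> bool" where
  "field_aut \<sigma> \<longleftrightarrow> bij \<sigma> \<and> (\<forall>x y. \<sigma> (x + y) = \<sigma> x + \<sigma> y \<and> \<sigma> (x * y) = \<sigma> x * \<sigma> y) \<and> \<sigma> 1 = 1"

definition Gal :: "'a::field set \<Rightarrow> ('a \<Rightarrow> 'a) set" where
  "Gal K = {\<sigma>. field_aut \<sigma> \<and> (\<forall>x\<in>K. \<sigma> x = x)}"

definition galois_ext :: "'a::field set \<Rightarrow> nat \<Rightarrow> bool" where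
  "galois_ext K d \<longleftrightarrow> ext_degree K d \<and> finite (Gal K) \<and> card (Gal K) = d"

definition ram_index :: "('a::field \<Rightarrow> int) \<Rightarrow> 'a set \<Rightarrow> nat" where
  "ram_index v K = nat (v (SOME p. uniformizer v K p))"

definition totally_ramified :: "('a::field \<Rightarrow> int) \<Rightarrow> 'a set \<Rightarrow> nat \<Rightarrow> bool" where
  "totally_ramified v K d \<longleftrightarrow> ram_index v K = d"

text \<open>Tame: the residue characteristic does not divide the ramification index,
  i.e. the image of the integer e in O_L is a unit.\<close>
definition tamely_ramified :: "('a::field \<Rightarrow> int) \<Rightarrow> 'a set \<Rightarrow> bool" where
  "tamely_ramified v K \<longleftrightarrow> of_nat (ram_index v K) \<in> val_units v (UNIV :: 'a set)"

text \<open>x is a free generator of the O_K[G]-module P_L^n: the map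
  O_K[G] \<rightarrow> P_L^n, \<Sum> a_\<sigma> \<sigma> \<mapsto> \<Sum> a_\<sigma> \<sigma>(x) is well-defined and bijective.\<close>
definition free_generator :: "('a::field \<Rightarrow> int) \<Rightarrow> 'a set \<Rightarrow> ('a \<Rightarrow> 'a) set \<Rightarrow> int \<Rightarrow> 'a \<Rightarrow> bool" where
  "free_generator v K G n x \<longleftrightarrow>
     (\<forall>a. (\<forall>\<sigma>\<in>G. a \<sigma> \<in> val_ring v K) \<longrightarrow> (\<Sum>\<sigma>\<in>G. a \<sigma> * \<sigma> x) \<in> ideal_pow v n) \<and>
     (\<forall>y\<in>ideal_pow v n. \<exists>!a. (\<forall>\<sigma>\<in>G. a \<sigma> \<in> val_ring v K) \<and> (\<forall>\<sigma>. \<sigma> \<notin> G \<longrightarrow> a \<sigma> = 0) \<and>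
        y = (\<Sum>\<sigma>\<in>G. a \<sigma> * \<sigma> x))"

end

theory Submission
  imports "HOL-Computational_Algebra.Polynomial" "HOL-Algebra.Embedded_Algebras" Defs
begin

definition RR :: "'a::field ring" where
  "RR = \<lparr>carrier = UNIV, monoid.mult = (\<lambda>x y. x * y), one = 1, ring.zero = 0, add = (\<lambda>x y. x + y)\<rparr>"

lemma RR_simps [simp]: "carrier RR = UNIV" "mult RR = (*)" "one RR = 1" "zero RR = 0" "add RR = (+)"
  by (auto simp: RR_def)

lemma RR_field: "field (RR :: 'a::field ring)"
proof -
  have "\<exists>y. x + y = 0" for x :: 'a
    using add.right_inverse by blast
  moreover have "x \<noteq> 0 \<Longrightarrow> \<exists>y. x * y = 1" for x :: 'a
    by (rule exI[of _ "inverse x"]) auto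
  ultimately show ?thesis
    unfolding RR_def using add.right_inverse
    by unfold_locales (auto simp:algebra_simps Units_def)
qed

lemma RR_ring: "ring (RR :: 'a::field ring)"
  using RR_field field.is_ring by blast

lemma RR_uminus [simp]: "a_inv RR x = - (x::'a::field)"
proof -
  interpret field RR by (rule RR_field)
  have "x \<oplus>\<^bsub>RR\<^esub> (- x) = \<zero>\<^bsub>RR\<^esub>" by simp
  thus ?thesis using minus_equality[of "-x" x] by (metis RR_simps(1) UNIV_I a_comm)
qed

lemma RR_subfield:
  assumes "Defs.subfield (K::'a::field set)"
  shows "Subrings.subfield K RR"
proof -
  interpret field RR by (rule RR_field)
  have sr: "subring K RR"
  proof (rule subringI)
    show "K \<subseteq> carrier RR" by simp
    show "\<one>\<^bsub>RR\<^esub> \<in> K" using assms by (simp add: Defs.subfield_def)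
    fix h assume "h \<in> K" thus "\<ominus>\<^bsub>RR\<^esub> h \<in> K" using assms
      by (auto simp: Defs.subfield_def)
  next
    fix h1 h2 assume "h1 \<in> K" "h2 \<in> K" thus "h1 \<otimes>\<^bsub>RR\<^esub> h2 \<in> K" "h1 \<oplus>\<^bsub>RR\<^esub> h2 \<in> K"
      using assms by (auto simp: Defs.subfield_def)
  qed
  show ?thesis
  proof (rule subfieldI)
    show "subcring K RR" by (rule subcringI'[OF sr])
    show "Units (RR\<lparr>carrier := K\<rparr>) = K - {\<zero>\<^bsub>RR\<^esub>}"
    proof
      show "Units (RR\<lparr>carrier := K\<rparr>) \<subseteq> K - {\<zero>\<^bsub>RR\<^esub>}"
        by (auto simp: Units_def)
      show "K - {\<zero>\<^bsub>RR\<^esub>} \<subseteq> Units (RR\<lparr>carrier := K\<rparr>)"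
      proof
        fix x assume x: "x \<in> K - {\<zero>\<^bsub>RR\<^esub>}"
        hence "inverse x \<in> K" "x \<in> K" "x \<noteq> 0" using assms by (auto simp: Defs.subfield_def)
        thus "x \<in> Units (RR\<lparr>carrier := K\<rparr>)"
          unfolding Units_def by (auto simp: RR_def intro!: bexI[of _ "inverse x"])
      qed
    qed
  qed
qed

lemma RR_combine:
  "ring.combine RR Ks Us = (\<Sum>i<min (length Ks) (length Us). Ks!i * Us!i)"
proof (induction Ks arbitrary: Us)
  case Nil then show ?case by (simp add: ring.combine.simps[OF RR_ring])
next
  case (Cons k Ks)
  show ?case
  proof (cases Us)
    case Nil then show ?thesis by (simp add: ring.combine.simps[OF RR_ring])
  next
    case (Cons u Us')
    have "(\<Sum>i<min (length (k#Ks)) (length (u#Us')). (k#Ks)!i * (u#Us')!i)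
      = k * u + (\<Sum>i<min (length Ks) (length Us'). Ks!i * Us'!i)"
      by (simp add: lessThan_Suc_eq_insert_0 sum.reindex)
    then show ?thesis using Cons.IH[of Us'] Cons by (simp add: ring.combine.simps[OF RR_ring])
  qed
qed


lemma sum_trunc:
  fixes g :: "nat \<Rightarrow> 'a::field"
  assumes "m \<le> e"
  shows "(\<Sum>i<e. (if i < m then g i else 0) * f i) = (\<Sum>i<m. g i * f i)"
proof -
  have "(\<Sum>i<e. (if i < m then g i else 0) * f i) = (\<Sum>i<m. (if i < m then g i else 0) * f i)"
    using assms by (intro sum.mono_neutral_right) auto
  thus ?thesis by simp
qed

lemma span_mem_iff:
  assumes SF: "Defs.subfield K"
  shows "x \<in> ring.Span RR K (map f [0..<e]) \<longleftrightarrow>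
    (\<exists>c. (\<forall>i<e. c i \<in> K) \<and> (\<forall>i\<ge>e. c i = 0) \<and> x = (\<Sum>i<e. c i * f i))"
proof -
  have eq: "x \<in> ring.Span RR K (map f [0..<e]) \<longleftrightarrow>
     (\<exists>Ks. set Ks \<subseteq> K \<and> length Ks = e \<and> x = ring.combine RR Ks (map f [0..<e]))"
    using ring.Span_mem_iff_length_version[OF RR_ring RR_subfield[OF SF], of "map f [0..<e]" x] by simp
  show ?thesis unfolding eq
  proof
    assume "\<exists>Ks. set Ks \<subseteq> K \<and> length Ks = e \<and> x = ring.combine RR Ks (map f [0..<e])"
    then obtain Ks where Ks: "set Ks \<subseteq> K" "length Ks = e" "x = ring.combine RR Ks (map f [0..<e])" by blast
    show "\<exists>c. (\<forall>i<e. c i \<in> K) \<and> (\<forall>i\<ge>e. c i = 0) \<and> x = (\<Sum>i<e. c i * f i)"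
      using Ks by (intro exI[of _ "\<lambda>i. if i < e then Ks!i else 0"]) (auto simp: RR_combine)
  next
    assume "\<exists>c. (\<forall>i<e. c i \<in> K) \<and> (\<forall>i\<ge>e. c i = 0) \<and> x = (\<Sum>i<e. c i * f i)"
    then obtain c where c: "\<forall>i<e. c i \<in> K" "x = (\<Sum>i<e. c i * f i)" by blast
    show "\<exists>Ks. set Ks \<subseteq> K \<and> length Ks = e \<and> x = ring.combine RR Ks (map f [0..<e])"
      using c by (intro exI[of _ "map c [0..<e]"]) (auto simp: RR_combine)
  qed
qed

lemma indep_list:
  assumes SF: "Defs.subfield K"
  and indep: "\<And>c. (\<forall>i<e. c i \<in> K) \<Longrightarrow> (\<Sum>i<e. c i * f i) = 0 \<Longrightarrow> (\<forall>i<e. c i = 0)"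
  shows "ring.independent RR K (map f [0..<e])"
proof (rule ring.trivial_combine_imp_independent[OF RR_ring RR_subfield[OF SF]])
  show "set (map f [0..<e]) \<subseteq> carrier RR" by simp
  fix Ks assume Ks: "set Ks \<subseteq> K" "ring.combine RR Ks (map f [0..<e]) = \<zero>\<^bsub>RR\<^esub>"
  define m where "m = min (length Ks) e"
  define c where "c i = (if i < m then Ks!i else 0)" for i
  have "(\<Sum>i<e. c i * f i) = (\<Sum>i<m. Ks!i * f i)"
    unfolding c_def by (rule sum_trunc) (simp add: m_def)
  also have "\<dots> = 0" using Ks(2) by (simp add: RR_combine m_def)
  finally have "\<forall>i<e. c i = 0"
    using Ks(1) SF by (intro indep) (auto simp: c_def m_def Defs.subfield_def)
  thus "set (take (length (map f [0..<e])) Ks) \<subseteq> {\<zero>\<^bsub>RR\<^esub>}"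
    by (auto simp: c_def m_def set_conv_nth)
qed

lemma span_exists:
  fixes K :: "'a::field set" and w :: "nat \<Rightarrow> 'a"
  assumes SF: "Defs.subfield K" and deg: "ext_degree K e"
  and indep: "\<And>c. (\<forall>i<e. c i \<in> K) \<Longrightarrow> (\<Sum>i<e. c i * w i) = 0 \<Longrightarrow> (\<forall>i<e. c i = 0)"
  shows "\<exists>c. (\<forall>i<e. c i \<in> K) \<and> (\<forall>i\<ge>e. c i = 0) \<and> x = (\<Sum>i<e. c i * w i)"
proof -
  obtain b where b: "\<And>x. \<exists>!c. (\<forall>i<e. c i \<in> K) \<and> (\<forall>i\<ge>e. c i = 0) \<and> x = (\<Sum>i<e. c i * b i)"
    using deg unfolding ext_degree_def by blast
  have bind: "\<forall>i<e. c i = 0" if c: "\<forall>i<e. c i \<in> K" "(\<Sum>i<e. c i * b i) = 0" for c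
  proof -
    define c' where "c' i = (if i < e then c i else 0)" for i
    have s: "(\<Sum>i<e. c' i * b i) = 0" using c(2) unfolding c'_def by simp
    have z: "(\<Sum>i<e. (\<lambda>_. 0) i * b i) = (0::'a)" by simp
    define P where "P d = ((\<forall>i<e. d i \<in> K) \<and> (\<forall>i\<ge>e. d i = 0) \<and> 0 = (\<Sum>i<e. d i * b i))" for d
    have P1: "P c'"
      using c(1) s SF unfolding P_def c'_def Defs.subfield_def by auto
    have P2: "P (\<lambda>_. 0)"
      using SF unfolding P_def Defs.subfield_def by auto
    have u: "\<exists>!d. P d" using b[of 0] unfolding P_def .
    have "c' = (\<lambda>_. 0)"
      using u P1 P2 by blast
    show ?thesis
    proof (intro allI impI)
      fix i assume "i < e"
      hence "c i = c' i" by (simp add: c'_def)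
      thus "c i = 0" using \<open>c' = (\<lambda>_. 0)\<close> by simp
    qed
  qed
  have Bi: "ring.independent RR K (map b [0..<e])" by (rule indep_list[OF SF bind])
  have Wi: "ring.independent RR K (map w [0..<e])" by (rule indep_list[OF SF indep])
  have allB: "y \<in> ring.Span RR K (map b [0..<e])" for y
    unfolding span_mem_iff[OF SF] using b[of y] by blast
  show ?thesis
  proof (rule ccontr)
    assume "\<not> ?thesis"
    hence nx: "x \<notin> ring.Span RR K (map w [0..<e])" unfolding span_mem_iff[OF SF] by blast
    have I: "ring.independent RR K (x # map w [0..<e])"
      using ring.li_Cons[OF RR_ring _ nx Wi] by simp
    have "length (x # map w [0..<e]) \<le> length (map b [0..<e])"
      using ring.independent_length_le[OF RR_ring RR_subfield[OF SF] I Bi] allB by blast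
    thus False by simp
  qed
qed



locale dval =
  fixes v :: "'a::field \<Rightarrow> int"
  assumes nv: "normalized_dvf v"
begin

lemma vmult: "x \<noteq> 0 \<Longrightarrow> y \<noteq> 0 \<Longrightarrow> v (x * y) = v x + v y"
  using nv unfolding normalized_dvf_def by blast

lemma vadd: "x \<noteq> 0 \<Longrightarrow> y \<noteq> 0 \<Longrightarrow> x + y \<noteq> 0 \<Longrightarrow> v (x + y) \<ge> min (v x) (v y)"
  using nv unfolding normalized_dvf_def by blast

lemma vsurj: "\<exists>x. x \<noteq> 0 \<and> v x = n"
  using nv unfolding normalized_dvf_def by blast

lemma vone [simp]: "v 1 = 0"
  using vmult[of 1 1] by simp

lemma vinv: "x \<noteq> 0 \<Longrightarrow> v (inverse x) = - v x"
  using vmult[of x "inverse x"] by simp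

lemma vdiv: "x \<noteq> 0 \<Longrightarrow> y \<noteq> 0 \<Longrightarrow> v (x / y) = v x - v y"
  by (simp add: divide_inverse vmult vinv)

lemma vpow: "x \<noteq> 0 \<Longrightarrow> v (x ^ n) = int n * v x"
  by (induction n) (auto simp: vmult algebra_simps)

lemma vpowi: "x \<noteq> 0 \<Longrightarrow> v (x powi n) = n * v x"
  by (cases "n \<ge> 0") (auto simp: power_int_def vpow vinv)

lemma vminus1: "v (-1) = 0"
  using vmult[of "-1" "-1"] by simp

lemma vminus [simp]: "v (- x) = v x"
proof (cases "x = 0")
  case False
  have "- x = -1 * x" by simp
  thus ?thesis using vmult[of "-1" x] False vminus1 by simp
qed simp

lemma vstrict:
  assumes "x \<noteq> 0" "y \<noteq> 0" "v x < v y"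
  shows "x + y \<noteq> 0 \<and> v (x + y) = v x"
proof -
  have ne: "x + y \<noteq> 0"
  proof
    assume "x + y = 0" hence "y = - x" by (simp add: add_eq_0_iff)
    thus False using assms by simp
  qed
  have 1: "v (x + y) \<ge> v x" using vadd[OF assms(1,2) ne] assms(3) by simp
  have "v x \<ge> min (v (x + y)) (v (- y))"
    using vadd[of "x + y" "- y"] ne assms by simp
  hence "v x \<ge> v (x + y)" using assms by simp
  with 1 ne show ?thesis by simp
qed

lemma vsum_distinct:
  assumes "finite I" "I \<noteq> {}" "\<forall>i\<in>I. f i \<noteq> 0" "inj_on (\<lambda>i. v (f i)) I"
  shows "sum f I \<noteq> 0 \<and> v (sum f I) = Min ((\<lambda>i. v (f i)) ` I)"
  using assms
proof (induction I rule: finite_ne_induct)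
  case (singleton x) then show ?case by simp
next
  case (insert x F)
  have inj: "inj_on (\<lambda>i. v (f i)) F" using insert.prems(2) by (rule inj_on_subset) blast
  have nz: "\<forall>i\<in>F. f i \<noteq> 0" using insert.prems(1) by blast
  have IH: "sum f F \<noteq> 0" "v (sum f F) = Min ((\<lambda>i. v (f i)) ` F)"
    using insert.IH[OF nz inj] by auto
  have "Min ((\<lambda>i. v (f i)) ` F) \<in> (\<lambda>i. v (f i)) ` F"
    using insert.hyps by (intro Min_in) auto
  then obtain j where j: "j \<in> F" "v (f j) = Min ((\<lambda>i. v (f i)) ` F)" by auto
  have "v (f x) \<noteq> v (f j)"
  proof
    assume "v (f x) = v (f j)"
    hence "x = j" using insert.prems(2) j(1) unfolding inj_on_def by blast
    thus False using j(1) insert.hyps(3) by blast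
  qed
  hence neq: "v (f x) \<noteq> v (sum f F)" using j IH by simp
  have fx: "f x \<noteq> 0" using insert.prems(1) by blast
  have Mi: "Min ((\<lambda>i. v (f i)) ` insert x F) = min (v (f x)) (v (sum f F))"
    using IH(2) insert.hyps by (simp add: Min_insert)
  have sm: "sum f (insert x F) = f x + sum f F" using insert.hyps by simp
  show ?case
  proof (cases "v (f x) < v (sum f F)")
    case True
    with vstrict[OF fx IH(1) True] show ?thesis unfolding Mi sm by simp
  next
    case False
    hence lt: "v (sum f F) < v (f x)" using neq by simp
    from vstrict[OF IH(1) fx lt] show ?thesis unfolding Mi sm using lt by (simp add: add.commute)
  qed
qed

definition P :: "int \<Rightarrow> 'a set" where "P n = {x. x = 0 \<or> v x \<ge> n}"

lemma P_ideal_pow: "ideal_pow v n = P n" by (simp add: ideal_pow_def P_def)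

lemma P_0 [simp]: "0 \<in> P n" by (simp add: P_def)

lemma P_add: "x \<in> P n \<Longrightarrow> y \<in> P n \<Longrightarrow> x + y \<in> P n"
  unfolding P_def using vadd[of x y] by (cases "x = 0"; cases "y = 0"; cases "x + y = 0") auto

lemma P_minus: "x \<in> P n \<Longrightarrow> - x \<in> P n"
  unfolding P_def by auto

lemma P_diff: "x \<in> P n \<Longrightarrow> y \<in> P n \<Longrightarrow> x - y \<in> P n"
  using P_add[of x n "- y"] P_minus by simp

lemma P_mult: "x \<in> P m \<Longrightarrow> y \<in> P n \<Longrightarrow> x * y \<in> P (m + n)"
  unfolding P_def by (cases "x = 0"; cases "y = 0") (auto simp: vmult)

lemma P_mono: "x \<in> P n \<Longrightarrow> m \<le> n \<Longrightarrow> x \<in> P m"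
  unfolding P_def by auto

lemma P_sum: "(\<And>i. i \<in> I \<Longrightarrow> f i \<in> P n) \<Longrightarrow> sum f I \<in> P n"
  by (induction I rule: infinite_finite_induct) (auto intro: P_add)

lemma P_one [simp]: "1 \<in> P 0" by (simp add: P_def)

lemma P_pow: "x \<in> P 0 \<Longrightarrow> x ^ k \<in> P 0"
  using P_mult[of x 0 _ 0] by (induction k) auto

lemma P_val: "x \<noteq> 0 \<Longrightarrow> x \<in> P (v x)" by (simp add: P_def)

lemma tame_root:
  assumes e0: "of_nat e \<noteq> (0::'a)" "v (of_nat e) = 0"
    and y: "y \<in> P 1" and r: "(1 + y) ^ e = 1"
  shows "y = 0"
proof (rule ccontr)
  assume yne: "y \<noteq> 0"
  have k: "(1 + y) ^ k - 1 \<in> P 1" for k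
  proof (induction k)
    case (Suc k)
    have "(1 + y) ^ Suc k - 1 = (1 + y) * ((1 + y) ^ k - 1) + y" by (simp add: algebra_simps)
    moreover have "(1 + y) * ((1 + y) ^ k - 1) \<in> P 1"
      using P_mult[of "1 + y" 0 "(1 + y) ^ k - 1" 1] Suc P_add[OF P_one P_mono[OF y]] by simp
    ultimately show ?case using P_add y by simp
  qed simp
  define S where "S = (\<Sum>k<e. (1 + y) ^ k)"
  have "S - of_nat e = (\<Sum>k<e. (1 + y) ^ k - 1)" by (simp add: S_def sum_subtractf)
  hence Se: "S - of_nat e \<in> P 1" using k by (simp add: P_sum)
  have "S \<noteq> 0"
  proof
    assume "S = 0"
    hence "- (of_nat e :: 'a) \<in> P 1" using Se by simp
    thus False using e0 unfolding P_def by simp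
  qed
  have "y * S = (1 + y) ^ e - 1"
  proof -
    have "(1 - (1 + y)) * S = 1 - (1 + y) ^ e" unfolding S_def by (rule one_diff_power_eq[symmetric])
    thus ?thesis by (simp add: algebra_simps)
  qed
  hence "y * S = 0" using r by simp
  thus False using yne \<open>S \<noteq> 0\<close> by simp
qed

end


lemma aut_add: "field_aut \<sigma> \<Longrightarrow> \<sigma> (x + y) = \<sigma> x + \<sigma> y" by (simp add: field_aut_def)
lemma aut_mult: "field_aut \<sigma> \<Longrightarrow> \<sigma> (x * y) = \<sigma> x * \<sigma> y" by (simp add: field_aut_def)
lemma aut_one: "field_aut \<sigma> \<Longrightarrow> \<sigma> 1 = 1" by (simp add: field_aut_def)
lemma aut_inj: "field_aut \<sigma> \<Longrightarrow> inj \<sigma>" by (simp add: field_aut_def bij_is_inj)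
lemma aut_zero: "field_aut \<sigma> \<Longrightarrow> \<sigma> 0 = 0"
proof -
  assume a: "field_aut \<sigma>"
  have "\<sigma> 0 + \<sigma> 0 = \<sigma> 0 + 0" using aut_add[OF a, of 0 0] by simp
  thus ?thesis by (rule add_left_imp_eq)
qed
lemma aut_minus: "field_aut \<sigma> \<Longrightarrow> \<sigma> (- x) = - \<sigma> x"
  using aut_add[of \<sigma> x "- x"] aut_zero[of \<sigma>] by (simp add: add_eq_0_iff)
lemma aut_diff: "field_aut \<sigma> \<Longrightarrow> \<sigma> (x - y) = \<sigma> x - \<sigma> y"
  using aut_add[of \<sigma> x "- y"] aut_minus[of \<sigma> y] by simp
lemma aut_sum: "field_aut \<sigma> \<Longrightarrow> \<sigma> (sum f A) = (\<Sum>i\<in>A. \<sigma> (f i))"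
  by (induction A rule: infinite_finite_induct) (auto simp: aut_zero aut_add)
lemma aut_pow: "field_aut \<sigma> \<Longrightarrow> \<sigma> (x ^ n) = \<sigma> x ^ n"
  by (induction n) (auto simp: aut_one aut_mult)
lemma aut_nz: "field_aut \<sigma> \<Longrightarrow> x \<noteq> 0 \<Longrightarrow> \<sigma> x \<noteq> 0"
  using aut_inj[of \<sigma>] aut_zero[of \<sigma>] by (metis injD)
lemma aut_inverse: "field_aut (\<sigma>::'a::field \<Rightarrow> 'a) \<Longrightarrow> \<sigma> (inverse x) = inverse (\<sigma> x)"
proof (cases "x = 0")
  case True assume "field_aut \<sigma>" thus ?thesis using True by (simp add: aut_zero)
next
  case False assume a: "field_aut \<sigma>"
  have "\<sigma> x * \<sigma> (inverse x) = 1" using aut_mult[OF a, of x "inverse x"] aut_one[OF a] False by simp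
  thus ?thesis using aut_nz[OF a False] by (simp add: field_simps)
qed
lemma aut_powi: "field_aut (\<sigma>::'a::field \<Rightarrow> 'a) \<Longrightarrow> \<sigma> (x powi n) = \<sigma> x powi n"
  by (cases "n \<ge> 0") (auto simp: power_int_def aut_pow aut_inverse)
lemma aut_comp: "field_aut \<sigma> \<Longrightarrow> field_aut \<tau> \<Longrightarrow> field_aut (\<sigma> \<circ> \<tau>)"
  unfolding field_aut_def by (auto intro: bij_comp)

locale setting = dval v for v :: "'a::field \<Rightarrow> int" +
  fixes K :: "'a set" and e :: nat and \<pi>L \<pi>K :: 'a
  assumes SF: "Defs.subfield K" and gal: "galois_ext K e" and tot: "totally_ramified v K e"
    and tame: "tamely_ramified v K" and uL: "uniformizer v UNIV \<pi>L" and uK: "uniformizer v K \<pi>K"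
    and pe: "\<pi>L ^ e = \<pi>K"
begin

lemma K0: "0 \<in> K" using SF by (simp add: Defs.subfield_def)
lemma K1: "1 \<in> K" using SF by (simp add: Defs.subfield_def)
lemma Kadd: "x \<in> K \<Longrightarrow> y \<in> K \<Longrightarrow> x + y \<in> K" using SF by (simp add: Defs.subfield_def)
lemma Kdiff: "x \<in> K \<Longrightarrow> y \<in> K \<Longrightarrow> x - y \<in> K" using SF by (simp add: Defs.subfield_def)
lemma Kmult: "x \<in> K \<Longrightarrow> y \<in> K \<Longrightarrow> x * y \<in> K" using SF by (simp add: Defs.subfield_def)
lemma Kinv: "x \<in> K \<Longrightarrow> inverse x \<in> K" using SF by (simp add: Defs.subfield_def)
lemma Kminus: "x \<in> K \<Longrightarrow> - x \<in> K" using Kdiff[OF K0, of x] by simp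
lemma Kdiv: "x \<in> K \<Longrightarrow> y \<in> K \<Longrightarrow> x / y \<in> K" by (simp add: divide_inverse Kmult Kinv)
lemma Kpow: "x \<in> K \<Longrightarrow> x ^ n \<in> K" by (induction n) (auto simp: K1 Kmult)
lemma Kpowi: "x \<in> K \<Longrightarrow> x powi n \<in> K" by (cases "n \<ge> 0") (auto simp: power_int_def Kpow Kinv)
lemma Ksum: "(\<And>i. i \<in> A \<Longrightarrow> f i \<in> K) \<Longrightarrow> sum f A \<in> K"
  by (induction A rule: infinite_finite_induct) (auto simp: K0 Kadd)
lemma Knat: "of_nat n \<in> K" by (induction n) (auto simp: K0 K1 Kadd)

lemma piL: "\<pi>L \<noteq> 0" "v \<pi>L = 1"
proof -
  show nz: "\<pi>L \<noteq> 0" using uL by (simp add: uniformizer_def)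
  obtain x where x: "x \<noteq> 0" "v x = 1" using vsurj by blast
  have "v \<pi>L \<le> v x" "v \<pi>L > 0" using uL x by (auto simp: uniformizer_def)
  thus "v \<pi>L = 1" using x by simp
qed

lemma piK: "\<pi>K \<noteq> 0" "\<pi>K \<in> K" "v \<pi>K = int e"
  using uK pe piL vpow[of \<pi>L e] by (auto simp: uniformizer_def)

lemma epos: "e > 0"
  using uK piK by (auto simp: uniformizer_def)

lemma e_unit: "of_nat e \<noteq> (0::'a)" "v (of_nat e) = 0"
  using tame tot by (auto simp: tamely_ramified_def totally_ramified_def val_units_def)

lemma Kval: assumes "c \<in> K" "c \<noteq> 0" shows "int e dvd v c"
proof -
  define q where "q = v c div int e"
  define r where "r = v c mod int e"
  have vc: "v c = q * int e + r" by (simp add: q_def r_def)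
  have r: "0 \<le> r" "r < int e" using epos by (auto simp: r_def)
  define d where "d = c * \<pi>K powi (- q)"
  have d: "d \<in> K" "d \<noteq> 0" using assms piK by (auto simp: d_def Kmult Kpowi)
  have "v d = v c + (- q) * int e" using assms piK by (simp add: d_def vmult vpowi power_int_not_zero)
  hence vd: "v d = r" using vc by simp
  have "r = 0"
  proof (rule ccontr)
    assume "r \<noteq> 0"
    hence "v \<pi>K \<le> v d" using uK d vd r by (auto simp: uniformizer_def)
    thus False using vd r piK by simp
  qed
  thus ?thesis using vc by simp
qed

lemma dvd_bound: "int e dvd k \<Longrightarrow> k > - int e \<Longrightarrow> k \<ge> (0::int)"
proof -
  assume "int e dvd k" "k > - int e"
  then obtain m where m: "k = int e * m" by (auto elim: dvdE)
  show ?thesis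
  proof (rule ccontr)
    assume "\<not> k \<ge> 0"
    have "m < 0"
    proof (rule ccontr)
      assume "\<not> m < 0" hence "int e * m \<ge> 0" by simp
      thus False using m \<open>\<not> k \<ge> 0\<close> by simp
    qed
    hence "m \<le> -1" by simp
    hence "int e * m \<le> int e * (-1)" using epos by (intro mult_left_mono) auto
    thus False using m \<open>k > - int e\<close> by simp
  qed
qed

abbreviation Sm :: "(nat \<Rightarrow> 'a) \<Rightarrow> 'a" where "Sm c \<equiv> (\<Sum>i<e. c i * \<pi>L ^ i)"

lemma vmin:
  assumes K: "\<forall>i<e. c i \<in> K" and i0: "i0 < e" "c i0 \<noteq> 0"
  shows "Sm c \<noteq> 0 \<and> (\<forall>i<e. c i \<noteq> 0 \<longrightarrow> v (Sm c) \<le> v (c i) + int i)"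
proof -
  define I where "I = {i. i < e \<and> c i \<noteq> 0}"
  have fI: "finite I" "I \<noteq> {}" using i0 by (auto simp: I_def)
  have eq: "Sm c = (\<Sum>i\<in>I. c i * \<pi>L ^ i)"
    by (rule sum.mono_neutral_right) (auto simp: I_def)
  have nz: "\<forall>i\<in>I. c i * \<pi>L ^ i \<noteq> 0" using piL by (auto simp: I_def)
  have vt: "v (c i * \<pi>L ^ i) = v (c i) + int i" if "i \<in> I" for i
    using that piL by (auto simp: I_def vmult vpow)
  have inj: "inj_on (\<lambda>i. v (c i * \<pi>L ^ i)) I"
  proof (rule inj_onI)
    fix i j assume ij: "i \<in> I" "j \<in> I" "v (c i * \<pi>L ^ i) = v (c j * \<pi>L ^ j)"
    hence eqv: "v (c i) + int i = v (c j) + int j" using vt by simp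
    have "int e dvd v (c i)" "int e dvd v (c j)" using ij K by (auto simp: I_def intro: Kval)
    moreover have "int i - int j = v (c j) - v (c i)" using eqv by simp
    ultimately have "int e dvd (int i - int j)" by (simp add: dvd_diff)
    moreover have "\<bar>int i - int j\<bar> < int e" using ij by (auto simp: I_def)
    ultimately have "int i - int j = 0"
    proof (rule_tac ccontr)
      assume d: "int e dvd (int i - int j)" "\<bar>int i - int j\<bar> < int e" "int i - int j \<noteq> 0"
      from dvd_imp_le_int[OF d(3) d(1)] have "\<bar>int e\<bar> \<le> \<bar>int i - int j\<bar>" .
      thus False using d(2) by simp
    qed
    thus "i = j" by simp
  qed
  from vsum_distinct[OF fI nz inj] have
    s: "(\<Sum>i\<in>I. c i * \<pi>L ^ i) \<noteq> 0" "v (\<Sum>i\<in>I. c i * \<pi>L ^ i) = Min ((\<lambda>i. v (c i * \<pi>L ^ i)) ` I)" by auto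
  show ?thesis
  proof (intro conjI allI impI)
    show "Sm c \<noteq> 0" using s eq by simp
    fix i assume "i < e" "c i \<noteq> 0"
    hence iI: "i \<in> I" by (simp add: I_def)
    have "Min ((\<lambda>i. v (c i * \<pi>L ^ i)) ` I) \<le> v (c i * \<pi>L ^ i)"
      using fI iI by (intro Min_le) auto
    thus "v (Sm c) \<le> v (c i) + int i" using s eq vt[OF iI] by simp
  qed
qed

lemma indepL: "\<forall>i<e. c i \<in> K \<Longrightarrow> Sm c = 0 \<Longrightarrow> \<forall>i<e. c i = 0"
  using vmin by blast

lemma coord_unique:
  assumes "\<forall>i<e. c i \<in> K" "\<forall>i<e. d i \<in> K" "Sm c = Sm d"
  shows "\<forall>i<e. c i = d i"
proof -
  have "Sm (\<lambda>i. c i - d i) = Sm c - Sm d" by (simp add: sum_subtractf algebra_simps)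
  hence "\<forall>i<e. c i - d i = 0" using assms by (intro indepL) (auto intro: Kdiff)
  thus ?thesis by simp
qed

lemma decompK: "\<exists>c. (\<forall>i<e. c i \<in> K) \<and> (\<forall>i\<ge>e. c i = 0) \<and> x = Sm c"
  using span_exists[OF SF _ indepL, where x=x] gal by (auto simp: galois_ext_def)

lemma decompO:
  assumes "x \<in> P 0"
  shows "\<exists>c. (\<forall>i<e. c i \<in> K \<and> c i \<in> P 0) \<and> (\<forall>i\<ge>e. c i = 0) \<and> x = Sm c"
proof -
  obtain c where c: "\<forall>i<e. c i \<in> K" "\<forall>i\<ge>e. c i = 0" "x = Sm c" using decompK by blast
  have "c i \<in> P 0" if i: "i < e" for i
  proof (cases "c i = 0")
    case False
    have "Sm c \<noteq> 0" "v (Sm c) \<le> v (c i) + int i" using vmin[OF c(1) i False] i False by auto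
    hence "v (c i) + int i \<ge> 0" using assms c(3) by (auto simp: P_def)
    hence "v (c i) > - int e" using i by simp
    hence "v (c i) \<ge> 0" using dvd_bound Kval c(1) i False by blast
    thus ?thesis by (simp add: P_def)
  qed simp
  thus ?thesis using c by blast
qed

lemma piL_P: "\<pi>L ^ i \<in> P (int i)" "\<pi>L powi n \<in> P n"
  using piL by (auto simp: P_def vpow vpowi power_int_not_zero)

lemma SmP: "\<forall>i<e. c i \<in> P 0 \<Longrightarrow> Sm c \<in> P 0"
proof (intro P_sum)
  fix i assume "\<forall>i<e. c i \<in> P 0" "i \<in> {..<e}"
  hence "c i \<in> P 0" by simp
  from P_mult[OF this P_mono[OF piL_P(1)[of i]]] show "c i * \<pi>L ^ i \<in> P 0" by simp
qed

end


lemma roots_unity_card: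
  assumes "i > 0"
  shows "finite {z::'a::field. z ^ i = 1} \<and> card {z::'a::field. z ^ i = 1} \<le> i"
proof -
  define p :: "'a poly" where "p = Polynomial.monom 1 i - 1"
  have ev: "poly p z = z ^ i - 1" for z by (simp add: p_def poly_monom)
  have d1: "degree (Polynomial.monom (1::'a) i + (- 1)) = i"
    by (rule trans[OF degree_add_eq_left]) (simp_all add: degree_monom_eq assms)
  have "p = Polynomial.monom 1 i + (- 1)" by (simp add: p_def)
  hence dp: "degree p = i" using d1 by simp
  have "p \<noteq> 0" using dp assms by auto
  have eq: "{z. z ^ i = 1} = {z. poly p z = 0}" by (simp add: ev)
  show ?thesis unfolding eq using card_poly_roots_bound[OF \<open>p \<noteq> 0\<close>] poly_roots_finite[OF \<open>p \<noteq> 0\<close>] dp by simp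
qed

context setting begin

definition zeta :: "('a \<Rightarrow> 'a) \<Rightarrow> 'a" where "zeta \<sigma> = \<sigma> \<pi>L / \<pi>L"

lemma GalD: "\<sigma> \<in> Gal K \<Longrightarrow> field_aut \<sigma>" "\<sigma> \<in> Gal K \<Longrightarrow> x \<in> K \<Longrightarrow> \<sigma> x = x"
  by (auto simp: Gal_def)

lemma finG: "finite (Gal K)" and cardG: "card (Gal K) = e"
  using gal by (auto simp: galois_ext_def)

lemma sig_piL: "\<sigma> \<in> Gal K \<Longrightarrow> \<sigma> \<pi>L = zeta \<sigma> * \<pi>L"
  using piL by (simp add: zeta_def)

lemma zeta_e: assumes "\<sigma> \<in> Gal K" shows "zeta \<sigma> ^ e = 1"
proof -
  have "\<sigma> \<pi>L ^ e = \<pi>L ^ e"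
    using aut_pow[OF GalD(1)[OF assms], of \<pi>L e] GalD(2)[OF assms piK(2)] pe by simp
  thus ?thesis using piL by (simp add: zeta_def power_divide)
qed

lemma zeta_nz: "\<sigma> \<in> Gal K \<Longrightarrow> zeta \<sigma> \<noteq> 0"
  using zeta_e[of \<sigma>] epos by (auto simp: zero_power)

lemma zeta_v: assumes "\<sigma> \<in> Gal K" shows "v (zeta \<sigma>) = 0"
proof -
  have "int e * v (zeta \<sigma>) = 0" using vpow[OF zeta_nz[OF assms], of e] zeta_e[OF assms] by simp
  thus ?thesis using epos by simp
qed

lemma zeta_P: "\<sigma> \<in> Gal K \<Longrightarrow> zeta \<sigma> \<in> P 0"
  using zeta_v by (simp add: P_def)

lemma sig_pow: "\<sigma> \<in> Gal K \<Longrightarrow> \<sigma> (\<pi>L ^ i) = zeta \<sigma> ^ i * \<pi>L ^ i"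
  using aut_pow[OF GalD(1), of \<sigma> \<pi>L i] sig_piL[of \<sigma>] by (simp add: power_mult_distrib)

lemma sig_Sm:
  assumes "\<sigma> \<in> Gal K" "\<forall>i<e. c i \<in> K"
  shows "\<sigma> (Sm c) = (\<Sum>i<e. c i * zeta \<sigma> ^ i * \<pi>L ^ i)"
  using assms by (auto simp: aut_sum[OF GalD(1)] aut_mult[OF GalD(1)] GalD(2) sig_pow mult.assoc
      intro!: sum.cong)

lemma zeta_inj: "inj_on zeta (Gal K)"
proof (rule inj_onI)
  fix \<sigma> \<tau> assume a: "\<sigma> \<in> Gal K" "\<tau> \<in> Gal K" "zeta \<sigma> = zeta \<tau>"
  show "\<sigma> = \<tau>"
  proof
    fix x
    obtain c where c: "\<forall>i<e. c i \<in> K" "x = Sm c" using decompK by blast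
    show "\<sigma> x = \<tau> x" using sig_Sm[OF a(1) c(1)] sig_Sm[OF a(2) c(1)] a(3) c(2) by simp
  qed
qed

lemma comp_G: "\<sigma> \<in> Gal K \<Longrightarrow> \<tau> \<in> Gal K \<Longrightarrow> \<sigma> \<circ> \<tau> \<in> Gal K"
  by (auto simp: Gal_def aut_comp)

lemma zeta_fix:
  assumes s: "\<sigma> \<in> Gal K" and t: "\<tau> \<in> Gal K"
  shows "\<tau> (zeta \<sigma>) = zeta \<sigma>"
proof -
  let ?z = "zeta \<sigma>"
  obtain c where c: "\<forall>i<e. c i \<in> K \<and> c i \<in> P 0" "?z = Sm c" using decompO[OF zeta_P[OF s]] by blast
  have cK: "\<forall>i<e. c i \<in> K" using c by blast
  have "\<tau> ?z - ?z = (\<Sum>i<e. c i * (zeta \<tau> ^ i - 1) * \<pi>L ^ i)"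
    using sig_Sm[OF t cK] c(2) by (simp add: sum_subtractf[symmetric] algebra_simps)
  also have "\<dots> \<in> P 1"
  proof (rule P_sum)
    fix i assume i: "i \<in> {..<e}"
    show "c i * (zeta \<tau> ^ i - 1) * \<pi>L ^ i \<in> P 1"
    proof (cases "i = 0")
      case False
      have "c i * (zeta \<tau> ^ i - 1) \<in> P (0 + 0)"
        using c i by (intro P_mult P_diff P_pow zeta_P t) auto
      from P_mult[OF this piL_P(1)[of i]] show ?thesis using False by (auto intro: P_mono)
    qed simp
  qed
  finally have d: "\<tau> ?z - ?z \<in> P 1" .
  define y where "y = (\<tau> ?z - ?z) * inverse ?z"
  have yP: "y \<in> P 1" unfolding y_def using P_mult[OF d, of "inverse ?z" 0] zeta_nz[OF s] zeta_v[OF s]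
    by (simp add: P_def vinv)
  have "(1 + y) = \<tau> ?z / ?z" using zeta_nz[OF s] by (simp add: y_def field_simps)
  hence "(1 + y) ^ e = \<tau> (?z ^ e) / ?z ^ e" by (simp add: power_divide aut_pow[OF GalD(1)[OF t]])
  hence "(1 + y) ^ e = 1" using zeta_e[OF s] aut_one[OF GalD(1)[OF t]] by simp
  from tame_root[OF e_unit yP this] have "y = 0" .
  thus ?thesis using zeta_nz[OF s] by (simp add: y_def)
qed

lemma zeta_mult:
  assumes s: "\<sigma> \<in> Gal K" and t: "\<tau> \<in> Gal K"
  shows "zeta (\<sigma> \<circ> \<tau>) = zeta \<sigma> * zeta \<tau>"
proof -
  have "(\<sigma> \<circ> \<tau>) \<pi>L = \<sigma> (zeta \<tau> * \<pi>L)" using sig_piL[OF t] by simp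
  also have "\<dots> = zeta \<tau> * (zeta \<sigma> * \<pi>L)"
    using aut_mult[OF GalD(1)[OF s]] zeta_fix[OF t s] sig_piL[OF s] by simp
  finally show ?thesis using piL by (simp add: zeta_def)
qed

lemma orth_nat:
  assumes i: "0 < i" "i < e"
  shows "(\<Sum>\<sigma>\<in>Gal K. zeta \<sigma> ^ i) = 0"
proof -
  have "\<exists>\<sigma>\<in>Gal K. zeta \<sigma> ^ i \<noteq> 1"
  proof (rule ccontr)
    assume "\<not> ?thesis"
    hence sub: "zeta ` Gal K \<subseteq> {z. z ^ i = 1}" by auto
    have "card (zeta ` Gal K) = e" using card_image[OF zeta_inj] cardG by simp
    moreover have "card (zeta ` Gal K) \<le> i"
    proof -
      have fr: "finite {z::'a. z ^ i = 1}" and cr: "card {z::'a. z ^ i = 1} \<le> i"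
        using roots_unity_card[OF i(1)] by auto
      show ?thesis using card_mono[OF fr sub] cr by linarith
    qed
    ultimately show False using i by simp
  qed
  then obtain \<sigma> where s: "\<sigma> \<in> Gal K" "zeta \<sigma> ^ i \<noteq> 1" by blast
  have inj: "inj_on ((\<circ>) \<sigma>) (Gal K)"
    using aut_inj[OF GalD(1)[OF s(1)]] by (auto simp: inj_on_def inj_def fun_eq_iff)
  have img: "(\<circ>) \<sigma> ` Gal K = Gal K"
    by (rule endo_inj_surj[OF finG _ inj]) (auto intro: comp_G[OF s(1)])
  have "(\<Sum>\<tau>\<in>Gal K. zeta \<tau> ^ i) = (\<Sum>\<tau>\<in>Gal K. zeta (\<sigma> \<circ> \<tau>) ^ i)"
    using sum.reindex[OF inj, of "\<lambda>\<tau>. zeta \<tau> ^ i"] img by simp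
  also have "\<dots> = zeta \<sigma> ^ i * (\<Sum>\<tau>\<in>Gal K. zeta \<tau> ^ i)"
    by (simp add: sum_distrib_left zeta_mult[OF s(1)] power_mult_distrib)
  finally have "(1 - zeta \<sigma> ^ i) * (\<Sum>\<tau>\<in>Gal K. zeta \<tau> ^ i) = 0" by (simp add: algebra_simps)
  thus ?thesis using s(2) by simp
qed

lemma trace:
  assumes c: "\<forall>i<e. c i \<in> K"
  shows "(\<Sum>\<sigma>\<in>Gal K. \<sigma> (Sm c)) = of_nat e * c 0"
proof -
  have "(\<Sum>\<sigma>\<in>Gal K. \<sigma> (Sm c)) = (\<Sum>\<sigma>\<in>Gal K. \<Sum>i<e. c i * zeta \<sigma> ^ i * \<pi>L ^ i)"
    using sig_Sm c by simp
  also have "\<dots> = (\<Sum>i<e. c i * \<pi>L ^ i * (\<Sum>\<sigma>\<in>Gal K. zeta \<sigma> ^ i))"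
    by (subst sum.swap) (simp add: sum_distrib_left algebra_simps)
  also have "\<dots> = c 0 * \<pi>L ^ 0 * (\<Sum>\<sigma>\<in>Gal K. zeta \<sigma> ^ 0)"
  proof (rule sum.remove[THEN trans])
    show "finite {..<e}" by simp
    show "0 \<in> {..<e}" using epos by simp
    have "(\<Sum>i\<in>{..<e} - {0}. c i * \<pi>L ^ i * (\<Sum>\<sigma>\<in>Gal K. zeta \<sigma> ^ i)) = 0"
      by (rule sum.neutral) (auto simp: orth_nat)
    thus "c 0 * \<pi>L ^ 0 * (\<Sum>\<sigma>\<in>Gal K. zeta \<sigma> ^ 0) +
       (\<Sum>i\<in>{..<e} - {0}. c i * \<pi>L ^ i * (\<Sum>\<sigma>\<in>Gal K. zeta \<sigma> ^ i)) =
       c 0 * \<pi>L ^ 0 * (\<Sum>\<sigma>\<in>Gal K. zeta \<sigma> ^ 0)" by simp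
  qed
  also have "\<dots> = of_nat e * c 0" using cardG by simp
  finally show ?thesis .
qed

lemma zetaK: assumes s: "\<sigma> \<in> Gal K" shows "zeta \<sigma> \<in> K"
proof -
  obtain c where c: "\<forall>i<e. c i \<in> K" "zeta \<sigma> = Sm c" using decompK by blast
  have "(\<Sum>\<tau>\<in>Gal K. \<tau> (zeta \<sigma>)) = (\<Sum>\<tau>\<in>Gal K. zeta \<sigma>)"
    by (rule sum.cong) (auto simp: zeta_fix[OF s])
  hence "(\<Sum>\<tau>\<in>Gal K. \<tau> (zeta \<sigma>)) = of_nat e * zeta \<sigma>"
    using cardG by simp
  moreover have "(\<Sum>\<tau>\<in>Gal K. \<tau> (Sm c)) = of_nat e * c 0" by (rule trace[OF c(1)])
  ultimately have "of_nat e * zeta \<sigma> = of_nat e * c 0" using c(2) by metis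
  hence "zeta \<sigma> = c 0" using e_unit by simp
  thus ?thesis using c epos by simp
qed

end


context setting begin

lemma vr: "x \<in> val_ring v S \<longleftrightarrow> x \<in> S \<and> x \<in> P 0" by (auto simp: val_ring_def P_def)

lemma zpowi: assumes "\<sigma> \<in> Gal K"
  shows "zeta \<sigma> powi m \<in> K" "zeta \<sigma> powi m \<in> P 0" "zeta \<sigma> powi m \<noteq> 0"
  using zetaK[OF assms] zeta_nz[OF assms] zeta_v[OF assms]
  by (auto simp: Kpowi P_def vpowi power_int_not_zero)

lemma zpowi_e: assumes "\<sigma> \<in> Gal K" shows "zeta \<sigma> powi (m + int e) = zeta \<sigma> powi m"
  using zeta_nz[OF assms] zeta_e[OF assms] by (simp add: power_int_add)

lemma orth_int:
  assumes "- int e < m" "m < int e" "m \<noteq> 0"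
  shows "(\<Sum>\<sigma>\<in>Gal K. zeta \<sigma> powi m) = 0"
proof (cases "m > 0")
  case True
  have "(\<Sum>\<sigma>\<in>Gal K. zeta \<sigma> powi m) = (\<Sum>\<sigma>\<in>Gal K. zeta \<sigma> ^ nat m)"
    using True by (intro sum.cong) (auto simp: power_int_def)
  thus ?thesis using orth_nat[of "nat m"] True assms by simp
next
  case False
  hence mm: "m + int e > 0" "m + int e < int e" using assms by auto
  have "(\<Sum>\<sigma>\<in>Gal K. zeta \<sigma> powi m) = (\<Sum>\<sigma>\<in>Gal K. zeta \<sigma> ^ nat (m + int e))"
  proof (rule sum.cong[OF refl])
    fix \<sigma> assume s: "\<sigma> \<in> Gal K"
    have "zeta \<sigma> powi m = zeta \<sigma> powi (m + int e)" by (rule zpowi_e[OF s, symmetric])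
    also have "\<dots> = zeta \<sigma> ^ nat (m + int e)" using mm by (simp add: power_int_def)
    finally show "zeta \<sigma> powi m = zeta \<sigma> ^ nat (m + int e)" .
  qed
  thus ?thesis using orth_nat[of "nat (m + int e)"] mm by simp
qed

lemma geo0: assumes "\<rho> ^ e = 1" "\<rho> \<noteq> (1::'a)" shows "(\<Sum>i<e. \<rho> ^ i) = 0"
  using one_diff_power_eq[of \<rho> e] assms by simp

definition B :: "int \<Rightarrow> (('a \<Rightarrow> 'a) \<Rightarrow> 'a) \<Rightarrow> nat \<Rightarrow> 'a" where
  "B n a i = (\<Sum>\<sigma>\<in>Gal K. a \<sigma> * zeta \<sigma> powi (n + int i))"

lemma B_O: "\<forall>\<sigma>\<in>Gal K. a \<sigma> \<in> K \<and> a \<sigma> \<in> P 0 \<Longrightarrow> B n a i \<in> K \<and> B n a i \<in> P 0"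
  unfolding B_def using zpowi
  by (auto intro!: Ksum Kmult P_sum P_mult[where m=0 and n=0, simplified])

lemma sig_x:
  assumes s: "\<sigma> \<in> Gal K" and u: "\<forall>i<e. u i \<in> K"
  shows "\<sigma> (\<pi>L powi n * Sm u) = \<pi>L powi n * (\<Sum>i<e. u i * zeta \<sigma> powi (n + int i) * \<pi>L ^ i)"
proof -
  have "\<sigma> (\<pi>L powi n) = zeta \<sigma> powi n * \<pi>L powi n"
    using aut_powi[OF GalD(1)[OF s]] sig_piL[OF s] by (simp add: power_int_mult_distrib)
  moreover have "zeta \<sigma> powi (n + int i) = zeta \<sigma> powi n * zeta \<sigma> ^ i" for i
    using zeta_nz[OF s] by (simp add: power_int_add)
  ultimately have "\<sigma> (\<pi>L powi n * Sm u) = zeta \<sigma> powi n * \<pi>L powi n * (\<Sum>i<e. u i * zeta \<sigma> ^ i * \<pi>L ^ i)"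
    and zz: "\<And>i. zeta \<sigma> powi (n + int i) = zeta \<sigma> powi n * zeta \<sigma> ^ i"
    using aut_mult[OF GalD(1)[OF s], of "\<pi>L powi n" "Sm u"] sig_Sm[OF s u] by auto
  thus ?thesis unfolding zz by (simp add: sum_distrib_left mult_ac)
qed

lemma Phi:
  assumes u: "\<forall>i<e. u i \<in> K"
  shows "(\<Sum>\<sigma>\<in>Gal K. a \<sigma> * \<sigma> (\<pi>L powi n * Sm u)) = \<pi>L powi n * Sm (\<lambda>i. u i * B n a i)"
proof -
  have "(\<Sum>\<sigma>\<in>Gal K. a \<sigma> * \<sigma> (\<pi>L powi n * Sm u))
     = (\<Sum>\<sigma>\<in>Gal K. a \<sigma> * (\<pi>L powi n * (\<Sum>i<e. u i * zeta \<sigma> powi (n + int i) * \<pi>L ^ i)))"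
    using sig_x[OF _ u] by simp
  also have "\<dots> = \<pi>L powi n * (\<Sum>\<sigma>\<in>Gal K. \<Sum>i<e. a \<sigma> * (u i * zeta \<sigma> powi (n + int i) * \<pi>L ^ i))"
    by (simp add: sum_distrib_left mult.left_commute)
  also have "\<dots> = \<pi>L powi n * (\<Sum>i<e. \<Sum>\<sigma>\<in>Gal K. a \<sigma> * (u i * zeta \<sigma> powi (n + int i) * \<pi>L ^ i))"
    by (subst sum.swap) simp
  also have "\<dots> = \<pi>L powi n * Sm (\<lambda>i. u i * B n a i)"
    unfolding B_def by (simp add: sum_distrib_left sum_distrib_right mult_ac)
  finally show ?thesis .
qed

lemma recover:
  assumes s: "\<sigma> \<in> Gal K"
  shows "(\<Sum>i<e. B n a i * zeta \<sigma> powi (- (n + int i))) = of_nat e * a \<sigma>"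
proof -
  have "(\<Sum>i<e. B n a i * zeta \<sigma> powi (- (n + int i)))
      = (\<Sum>\<tau>\<in>Gal K. a \<tau> * (\<Sum>i<e. zeta \<tau> powi (n + int i) * zeta \<sigma> powi (- (n + int i))))"
  proof -
    have "(\<Sum>i<e. B n a i * zeta \<sigma> powi (- (n + int i)))
      = (\<Sum>i<e. \<Sum>\<tau>\<in>Gal K. a \<tau> * (zeta \<tau> powi (n + int i) * zeta \<sigma> powi (- (n + int i))))"
      unfolding B_def by (simp add: sum_distrib_right mult.assoc)
    also have "\<dots> = (\<Sum>\<tau>\<in>Gal K. \<Sum>i<e. a \<tau> * (zeta \<tau> powi (n + int i) * zeta \<sigma> powi (- (n + int i))))"
      by (rule sum.swap)
    also have "\<dots> = (\<Sum>\<tau>\<in>Gal K. a \<tau> * (\<Sum>i<e. zeta \<tau> powi (n + int i) * zeta \<sigma> powi (- (n + int i))))"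
      by (simp add: sum_distrib_left)
    finally show ?thesis .
  qed
  also have "\<dots> = (\<Sum>\<tau>\<in>Gal K. a \<tau> * ((zeta \<tau> / zeta \<sigma>) powi n * (\<Sum>i<e. (zeta \<tau> / zeta \<sigma>) ^ i)))"
  proof (rule sum.cong[OF refl])
    fix \<tau> assume t: "\<tau> \<in> Gal K"
    have "zeta \<tau> powi (n + int i) * zeta \<sigma> powi (- (n + int i)) = (zeta \<tau> / zeta \<sigma>) powi n * (zeta \<tau> / zeta \<sigma>) ^ i" for i
    proof -
      have "(zeta \<tau> / zeta \<sigma>) powi n * (zeta \<tau> / zeta \<sigma>) ^ i = (zeta \<tau> / zeta \<sigma>) powi (n + int i)"
        using zeta_nz[OF s] zeta_nz[OF t] by (simp add: power_int_add)
      also have "\<dots> = zeta \<tau> powi (n + int i) / zeta \<sigma> powi (n + int i)" by (rule power_int_divide_distrib)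
      also have "\<dots> = zeta \<tau> powi (n + int i) * zeta \<sigma> powi (- (n + int i))"
        by (simp only: power_int_minus divide_inverse)
      finally show ?thesis by simp
    qed
    thus "a \<tau> * (\<Sum>i<e. zeta \<tau> powi (n + int i) * zeta \<sigma> powi (- (n + int i))) =
          a \<tau> * ((zeta \<tau> / zeta \<sigma>) powi n * (\<Sum>i<e. (zeta \<tau> / zeta \<sigma>) ^ i))"
      by (simp add: sum_distrib_left)
  qed
  also have "\<dots> = a \<sigma> * ((zeta \<sigma> / zeta \<sigma>) powi n * (\<Sum>i<e. (zeta \<sigma> / zeta \<sigma>) ^ i))"
  proof (rule sum.remove[OF finG s, THEN trans])
    have "a \<tau> * ((zeta \<tau> / zeta \<sigma>) powi n * (\<Sum>i<e. (zeta \<tau> / zeta \<sigma>) ^ i)) = 0"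
      if t: "\<tau> \<in> Gal K - {\<sigma>}" for \<tau>
    proof -
      have "zeta \<tau> \<noteq> zeta \<sigma>" using zeta_inj s t by (auto simp: inj_on_def)
      hence "zeta \<tau> / zeta \<sigma> \<noteq> 1" using zeta_nz[OF s] by simp
      moreover have "(zeta \<tau> / zeta \<sigma>) ^ e = 1" using zeta_e s t by (simp add: power_divide)
      ultimately show ?thesis using geo0 by simp
    qed
    hence "(\<Sum>\<tau>\<in>Gal K - {\<sigma>}. a \<tau> * ((zeta \<tau> / zeta \<sigma>) powi n * (\<Sum>i<e. (zeta \<tau> / zeta \<sigma>) ^ i))) = 0"
      by (intro sum.neutral) blast
    thus "a \<sigma> * ((zeta \<sigma> / zeta \<sigma>) powi n * (\<Sum>i<e. (zeta \<sigma> / zeta \<sigma>) ^ i)) +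
      (\<Sum>\<tau>\<in>Gal K - {\<sigma>}. a \<tau> * ((zeta \<tau> / zeta \<sigma>) powi n * (\<Sum>i<e. (zeta \<tau> / zeta \<sigma>) ^ i))) =
      a \<sigma> * ((zeta \<sigma> / zeta \<sigma>) powi n * (\<Sum>i<e. (zeta \<sigma> / zeta \<sigma>) ^ i))"
      by simp
  qed
  also have "\<dots> = of_nat e * a \<sigma>" using zeta_nz[OF s] by simp
  finally show ?thesis .
qed

end


context setting begin

lemma part_first: "\<forall>\<alpha>\<in>val_ring v UNIV. \<exists>!u. (\<forall>i<e. u i \<in> val_ring v K) \<and> (\<forall>i\<ge>e. u i = 0) \<and> \<alpha> = Sm u"
proof
  fix \<alpha> assume "\<alpha> \<in> val_ring v UNIV"
  hence "\<alpha> \<in> P 0" by (simp add: vr)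
  then obtain c where c: "\<forall>i<e. c i \<in> K \<and> c i \<in> P 0" "\<forall>i\<ge>e. c i = 0" "\<alpha> = Sm c"
    using decompO by blast
  show "\<exists>!u. (\<forall>i<e. u i \<in> val_ring v K) \<and> (\<forall>i\<ge>e. u i = 0) \<and> \<alpha> = Sm u"
  proof (rule ex1I[of _ c])
    show "(\<forall>i<e. c i \<in> val_ring v K) \<and> (\<forall>i\<ge>e. c i = 0) \<and> \<alpha> = Sm c" using c by (simp add: vr)
    fix d assume d: "(\<forall>i<e. d i \<in> val_ring v K) \<and> (\<forall>i\<ge>e. d i = 0) \<and> \<alpha> = Sm d"
    have dK: "\<forall>i<e. d i \<in> K" using d by (simp add: vr)
    have cK: "\<forall>i<e. c i \<in> K" using c by blast
    have "\<alpha> = Sm d" using d by blast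
    hence "Sm d = Sm c" using c(3) by metis
    hence eqdc: "\<forall>i<e. d i = c i" by (rule coord_unique[OF dK cK])
    show "d = c"
    proof
      fix i show "d i = c i"
      proof (cases "i < e")
        case True thus ?thesis using eqdc by simp
      next
        case False thus ?thesis using c(2) d by simp
      qed
    qed
  qed
qed

lemma Phi_in:
  assumes u: "\<forall>i<e. u i \<in> K \<and> u i \<in> P 0" and a: "\<forall>\<sigma>\<in>Gal K. a \<sigma> \<in> K \<and> a \<sigma> \<in> P 0"
  shows "(\<Sum>\<sigma>\<in>Gal K. a \<sigma> * \<sigma> (\<pi>L powi n * Sm u)) \<in> P n"
proof -
  have "Sm (\<lambda>i. u i * B n a i) \<in> P 0"
    using u B_O[OF a] by (intro SmP) (auto intro: P_mult[where m=0 and n=0, simplified])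
  from P_mult[OF piL_P(2)[of n] this] show ?thesis using Phi u by simp
qed

lemma delta_Sm: "k < e \<Longrightarrow> Sm (\<lambda>i. if i = k then 1 else 0) = \<pi>L ^ k"
  by (simp add: if_distrib[of "\<lambda>x. x * _"] cong: if_cong)

lemma backward:
  assumes u: "\<forall>i<e. u i \<in> K \<and> u i \<in> P 0"
    and free: "free_generator v K (Gal K) n (\<pi>L powi n * Sm u)"
  shows "\<forall>i<e. u i \<in> val_units v K"
proof (intro allI impI)
  fix k assume k: "k < e"
  let ?y = "\<pi>L powi (n + int k)"
  have yP: "?y \<in> ideal_pow v n" using piL_P(2)[of "n + int k"] by (auto simp: P_ideal_pow intro: P_mono)
  then obtain a where a: "\<forall>\<sigma>\<in>Gal K. a \<sigma> \<in> val_ring v K"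
    "?y = (\<Sum>\<sigma>\<in>Gal K. a \<sigma> * \<sigma> (\<pi>L powi n * Sm u))"
    using free unfolding free_generator_def by blast
  have aO: "\<forall>\<sigma>\<in>Gal K. a \<sigma> \<in> K \<and> a \<sigma> \<in> P 0" using a(1) by (simp add: vr)
  have uK: "\<forall>i<e. u i \<in> K" using u by blast
  have "\<pi>L powi n * \<pi>L ^ k = \<pi>L powi n * Sm (\<lambda>i. u i * B n a i)"
    using a(2) Phi[OF uK, where n=n and a=a] piL by (simp add: power_int_add)
  hence "Sm (\<lambda>i. if i = k then 1 else 0) = Sm (\<lambda>i. u i * B n a i)"
    using piL delta_Sm[OF k] by (simp add: power_int_not_zero)
  hence "\<forall>i<e. (if i = k then 1 else 0) = u i * B n a i"
    using u B_O[OF aO] by (intro coord_unique) (auto intro: K0 K1 Kmult)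
  hence one: "u k * B n a k = 1" using k by (metis (full_types))
  have bk: "B n a k \<in> P 0" "u k \<in> P 0" "u k \<in> K" using B_O[OF aO] u k by auto
  have nz: "u k \<noteq> 0" "B n a k \<noteq> 0" using one by auto
  have "v (u k) + v (B n a k) = 0" using vmult[OF nz] one by simp
  moreover have "v (u k) \<ge> 0" "v (B n a k) \<ge> 0" using bk nz by (auto simp: P_def)
  ultimately have "v (u k) = 0" by simp
  thus "u k \<in> val_units v K" using nz bk by (simp add: val_units_def)
qed

lemma B_inv:
  fixes n :: int
  assumes t: "\<forall>i<e. t i \<in> K" and j: "j < e"
  defines "a \<equiv> \<lambda>\<sigma>. if \<sigma> \<in> Gal K then inverse (of_nat e) * (\<Sum>i<e. t i * zeta \<sigma> powi (- (n + int i))) else 0"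
  shows "B n a j = t j"
proof -
  have "B n a j = (\<Sum>\<sigma>\<in>Gal K. inverse (of_nat e) * (\<Sum>i<e. t i * zeta \<sigma> powi (- (n + int i))) * zeta \<sigma> powi (n + int j))"
    unfolding B_def a_def by (rule sum.cong) auto
  also have "\<dots> = inverse (of_nat e) * (\<Sum>i<e. t i * (\<Sum>\<sigma>\<in>Gal K. zeta \<sigma> powi (int j - int i)))"
  proof -
    have pw: "zeta \<sigma> powi (- (n + int i)) * zeta \<sigma> powi (n + int j) = zeta \<sigma> powi (int j - int i)"
      if "\<sigma> \<in> Gal K" for \<sigma> i
      using zeta_nz[OF that] by (simp add: power_int_add[symmetric])
    have "(\<Sum>\<sigma>\<in>Gal K. inverse (of_nat e) * (\<Sum>i<e. t i * zeta \<sigma> powi (- (n + int i))) * zeta \<sigma> powi (n + int j))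
       = (\<Sum>\<sigma>\<in>Gal K. \<Sum>i<e. inverse (of_nat e) * t i * (zeta \<sigma> powi (- (n + int i)) * zeta \<sigma> powi (n + int j)))"
      by (simp add: sum_distrib_left sum_distrib_right mult_ac)
    also have "\<dots> = (\<Sum>\<sigma>\<in>Gal K. \<Sum>i<e. inverse (of_nat e) * t i * zeta \<sigma> powi (int j - int i))"
      using pw by simp
    also have "\<dots> = (\<Sum>i<e. \<Sum>\<sigma>\<in>Gal K. inverse (of_nat e) * t i * zeta \<sigma> powi (int j - int i))"
      by (rule sum.swap)
    also have "\<dots> = inverse (of_nat e) * (\<Sum>i<e. t i * (\<Sum>\<sigma>\<in>Gal K. zeta \<sigma> powi (int j - int i)))"
      by (simp add: sum_distrib_left mult_ac)
    finally show ?thesis .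
  qed
  also have "\<dots> = inverse (of_nat e) * (t j * of_nat e)"
  proof -
    have "(\<Sum>i<e. t i * (\<Sum>\<sigma>\<in>Gal K. zeta \<sigma> powi (int j - int i))) = t j * (\<Sum>\<sigma>\<in>Gal K. zeta \<sigma> powi (int j - int j))"
    proof (rule sum.remove[THEN trans])
      show "finite {..<e}" "j \<in> {..<e}" using j by auto
      have "(\<Sum>i\<in>{..<e} - {j}. t i * (\<Sum>\<sigma>\<in>Gal K. zeta \<sigma> powi (int j - int i))) = 0"
        using j by (intro sum.neutral) (auto simp: orth_int)
      thus "t j * (\<Sum>\<sigma>\<in>Gal K. zeta \<sigma> powi (int j - int j)) +
        (\<Sum>i\<in>{..<e} - {j}. t i * (\<Sum>\<sigma>\<in>Gal K. zeta \<sigma> powi (int j - int i))) =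
        t j * (\<Sum>\<sigma>\<in>Gal K. zeta \<sigma> powi (int j - int j))" by simp
    qed
    thus ?thesis using cardG by simp
  qed
  also have "\<dots> = t j" using e_unit by simp
  finally show ?thesis .
qed

lemma forward:
  assumes u: "\<forall>i<e. u i \<in> val_units v K"
  shows "free_generator v K (Gal K) n (\<pi>L powi n * Sm u)"
proof -
  have uO: "\<forall>i<e. u i \<in> K \<and> u i \<in> P 0" and unz: "\<forall>i<e. u i \<noteq> 0" and uv: "\<forall>i<e. v (u i) = 0"
    using u by (auto simp: val_units_def P_def)
  have uK: "\<forall>i<e. u i \<in> K" using uO by blast
  have uniq: "a1 = a2" if
    a1: "\<forall>\<sigma>\<in>Gal K. a1 \<sigma> \<in> val_ring v K" "\<forall>\<sigma>. \<sigma> \<notin> Gal K \<longrightarrow> a1 \<sigma> = 0"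
      "y = (\<Sum>\<sigma>\<in>Gal K. a1 \<sigma> * \<sigma> (\<pi>L powi n * Sm u))" and
    a2: "\<forall>\<sigma>\<in>Gal K. a2 \<sigma> \<in> val_ring v K" "\<forall>\<sigma>. \<sigma> \<notin> Gal K \<longrightarrow> a2 \<sigma> = 0"
      "y = (\<Sum>\<sigma>\<in>Gal K. a2 \<sigma> * \<sigma> (\<pi>L powi n * Sm u))" for y a1 a2
  proof
    fix \<sigma>
    have a1O: "\<forall>\<sigma>\<in>Gal K. a1 \<sigma> \<in> K \<and> a1 \<sigma> \<in> P 0" and a2O: "\<forall>\<sigma>\<in>Gal K. a2 \<sigma> \<in> K \<and> a2 \<sigma> \<in> P 0"
      using a1(1) a2(1) by (auto simp: vr)
    have "\<pi>L powi n * Sm (\<lambda>i. u i * B n a1 i) = \<pi>L powi n * Sm (\<lambda>i. u i * B n a2 i)"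
      using a1(3) a2(3) Phi[OF uK] by metis
    hence "Sm (\<lambda>i. u i * B n a1 i) = Sm (\<lambda>i. u i * B n a2 i)"
      using piL by (simp add: power_int_not_zero)
    hence "\<forall>i<e. u i * B n a1 i = u i * B n a2 i"
      using uK B_O[OF a1O] B_O[OF a2O] by (intro coord_unique) (auto intro: Kmult)
    hence Beq: "\<forall>i<e. B n a1 i = B n a2 i" using unz by simp
    show "a1 \<sigma> = a2 \<sigma>"
    proof (cases "\<sigma> \<in> Gal K")
      case True
      have "of_nat e * a1 \<sigma> = of_nat e * a2 \<sigma>"
        using recover[OF True, of n a1] recover[OF True, of n a2] Beq by simp
      thus ?thesis using e_unit by simp
    next
      case False thus ?thesis using a1(2) a2(2) by simp
    qed
  qed
  show ?thesis unfolding free_generator_def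
  proof (intro conjI allI impI ballI)
    fix a assume "\<forall>\<sigma>\<in>Gal K. a \<sigma> \<in> val_ring v K"
    hence "\<forall>\<sigma>\<in>Gal K. a \<sigma> \<in> K \<and> a \<sigma> \<in> P 0" by (simp add: vr)
    from Phi_in[OF uO this] show "(\<Sum>\<sigma>\<in>Gal K. a \<sigma> * \<sigma> (\<pi>L powi n * Sm u)) \<in> ideal_pow v n"
      by (simp add: P_ideal_pow)
  next
    fix y assume "y \<in> ideal_pow v n"
    hence yP: "y \<in> P n" by (simp add: P_ideal_pow)
    have "y * \<pi>L powi (- n) \<in> P (n + - n)" by (rule P_mult[OF yP piL_P(2)])
    hence "y * \<pi>L powi (- n) \<in> P 0" by simp
    then obtain w where w: "\<forall>i<e. w i \<in> K \<and> w i \<in> P 0" "y * \<pi>L powi (- n) = Sm w"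
      using decompO by blast
    have yw: "y = \<pi>L powi n * Sm w"
    proof -
      have "\<pi>L powi n * (y * \<pi>L powi (- n)) = y"
        using piL by (simp add: power_int_minus field_simps power_int_not_zero)
      thus ?thesis using w(2) by simp
    qed
    define t where "t i = w i / u i" for i
    have tO: "t i \<in> K \<and> t i \<in> P 0" if i: "i < e" for i
    proof
      show "t i \<in> K" using w uO i by (auto simp: t_def Kdiv)
      show "t i \<in> P 0"
      proof (cases "w i = 0")
        case False
        have "v (t i) = v (w i) - v (u i)" using vdiv[OF False] unz i by (simp add: t_def)
        moreover have "v (w i) \<ge> 0" using w i False by (auto simp: P_def)
        ultimately show ?thesis using uv i by (simp add: P_def)
      qed (simp add: t_def)
    qed
    have tK: "\<forall>i<e. t i \<in> K" using tO by blast
    define a where "a = (\<lambda>\<sigma>. if \<sigma> \<in> Gal K then inverse (of_nat e) * (\<Sum>i<e. t i * zeta \<sigma> powi (- (n + int i))) else 0)"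
    have aO: "a \<sigma> \<in> val_ring v K" if "\<sigma> \<in> Gal K" for \<sigma>
    proof -
      have ie: "inverse (of_nat e) \<in> K" "inverse (of_nat e :: 'a) \<in> P 0"
        using Knat e_unit by (auto intro: Kinv simp: P_def vinv)
      have "(\<Sum>i<e. t i * zeta \<sigma> powi (- (n + int i))) \<in> K"
        using tO zpowi[OF that] by (auto intro!: Ksum Kmult)
      moreover have "(\<Sum>i<e. t i * zeta \<sigma> powi (- (n + int i))) \<in> P 0"
        using tO zpowi[OF that] by (auto intro!: P_sum P_mult[where m=0 and n=0, simplified])
      moreover have "a \<sigma> = inverse (of_nat e) * (\<Sum>i<e. t i * zeta \<sigma> powi (- (n + int i)))"
        by (simp add: a_def that)
      ultimately show ?thesis using ie
        by (simp add: vr Kmult P_mult[where m=0 and n=0, simplified])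
    qed
    have Ba: "\<forall>j<e. B n a j = t j" using B_inv[OF tK] unfolding a_def by blast
    have ya: "y = (\<Sum>\<sigma>\<in>Gal K. a \<sigma> * \<sigma> (\<pi>L powi n * Sm u))"
    proof -
      have "(\<Sum>\<sigma>\<in>Gal K. a \<sigma> * \<sigma> (\<pi>L powi n * Sm u)) = \<pi>L powi n * Sm (\<lambda>i. u i * B n a i)"
        by (rule Phi[OF uK])
      also have "Sm (\<lambda>i. u i * B n a i) = Sm w"
      proof (rule sum.cong[OF refl])
        fix i assume "i \<in> {..<e}"
        hence "B n a i = t i" "u i \<noteq> 0" using Ba unz by auto
        thus "u i * B n a i * \<pi>L ^ i = w i * \<pi>L ^ i" by (simp add: t_def)
      qed
      finally show ?thesis using yw by simp
    qed
    show "\<exists>!a. (\<forall>\<sigma>\<in>Gal K. a \<sigma> \<in> val_ring v K) \<and> (\<forall>\<sigma>. \<sigma> \<notin> Gal K \<longrightarrow> a \<sigma> = 0) \<and>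
             y = (\<Sum>\<sigma>\<in>Gal K. a \<sigma> * \<sigma> (\<pi>L powi n * Sm u))"
    proof (rule ex1I[of _ a])
      show "(\<forall>\<sigma>\<in>Gal K. a \<sigma> \<in> val_ring v K) \<and> (\<forall>\<sigma>. \<sigma> \<notin> Gal K \<longrightarrow> a \<sigma> = 0) \<and>
             y = (\<Sum>\<sigma>\<in>Gal K. a \<sigma> * \<sigma> (\<pi>L powi n * Sm u))"
      proof -
        have "\<forall>\<sigma>. \<sigma> \<notin> Gal K \<longrightarrow> a \<sigma> = 0" by (simp add: a_def)
        thus ?thesis using aO ya by blast
      qed
      fix a' assume "(\<forall>\<sigma>\<in>Gal K. a' \<sigma> \<in> val_ring v K) \<and> (\<forall>\<sigma>. \<sigma> \<notin> Gal K \<longrightarrow> a' \<sigma> = 0) \<and>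
             y = (\<Sum>\<sigma>\<in>Gal K. a' \<sigma> * \<sigma> (\<pi>L powi n * Sm u))"
      hence p1: "\<forall>\<sigma>\<in>Gal K. a' \<sigma> \<in> val_ring v K" and p2: "\<forall>\<sigma>. \<sigma> \<notin> Gal K \<longrightarrow> a' \<sigma> = 0"
        and p3: "y = (\<Sum>\<sigma>\<in>Gal K. a' \<sigma> * \<sigma> (\<pi>L powi n * Sm u))" by blast+
      have q1: "\<forall>\<sigma>\<in>Gal K. a \<sigma> \<in> val_ring v K" using aO by blast
      have q2: "\<forall>\<sigma>. \<sigma> \<notin> Gal K \<longrightarrow> a \<sigma> = 0" by (simp add: a_def)
      show "a' = a" by (rule uniq[OF p1 p2 p3 q1 q2 ya])
    qed
  qed
qed

end

theorem proposition2p4: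
  fixes v :: "'a::field \<Rightarrow> int" and K :: "'a set" and e :: nat and \<pi>L \<pi>K :: 'a
  assumes "normalized_dvf v" and "subfield K"
    and "v_complete v UNIV" and "v_complete v K"
    and "finite_residue_field v UNIV" and "finite_residue_field v K"
    and "galois_ext K e"
    and "totally_ramified v K e" and "tamely_ramified v K"
    and "uniformizer v UNIV \<pi>L" and "uniformizer v K \<pi>K" and "\<pi>L ^ e = \<pi>K"
  shows "(\<forall>\<alpha>\<in>val_ring v UNIV. \<exists>!u. (\<forall>i<e. u i \<in> val_ring v K) \<and> (\<forall>i\<ge>e. u i = 0) \<and>
            \<alpha> = (\<Sum>i<e. u i * \<pi>L ^ i))
       \<and> (\<forall>\<alpha> u. (\<forall>i<e. u i \<in> val_ring v K) \<longrightarrow> \<alpha> = (\<Sum>i<e. u i * \<pi>L ^ i) \<longrightarrow>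
            (\<forall>n::int. free_generator v K (Gal K) n (\<pi>L powi n * \<alpha>)
                 \<longleftrightarrow> (\<forall>i<e. u i \<in> val_units v K)))
       \<and> (\<forall>n::int. free_generator v K (Gal K) n (\<pi>L powi n * (\<Sum>i<e. \<pi>L ^ i)))"
proof -
  interpret S: setting v K e \<pi>L \<pi>K
    by (unfold_locales) (use assms in \<open>auto simp: dval_def\<close>)
  have two: "\<forall>\<alpha> u. (\<forall>i<e. u i \<in> val_ring v K) \<longrightarrow> \<alpha> = (\<Sum>i<e. u i * \<pi>L ^ i) \<longrightarrow>
            (\<forall>n::int. free_generator v K (Gal K) n (\<pi>L powi n * \<alpha>)
                 \<longleftrightarrow> (\<forall>i<e. u i \<in> val_units v K))"
  proof (intro allI impI)
    fix \<alpha> u n assume u: "\<forall>i<e. u i \<in> val_ring v K" and al: "\<alpha> = (\<Sum>i<e. u i * \<pi>L ^ i)"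
    have uO: "\<forall>i<e. u i \<in> K \<and> u i \<in> S.P 0" using u by (simp add: S.vr)
    show "free_generator v K (Gal K) n (\<pi>L powi n * \<alpha>) \<longleftrightarrow> (\<forall>i<e. u i \<in> val_units v K)"
      using S.backward[OF uO] S.forward[of u n] al by blast
  qed
  have three: "\<forall>n::int. free_generator v K (Gal K) n (\<pi>L powi n * (\<Sum>i<e. \<pi>L ^ i))"
  proof
    fix n :: int
    have "\<forall>i<e. (\<lambda>_. 1::'a) i \<in> val_units v K" using S.K1 by (simp add: val_units_def)
    from S.forward[OF this, of n] show "free_generator v K (Gal K) n (\<pi>L powi n * (\<Sum>i<e. \<pi>L ^ i))" by simp
  qed
  show ?thesis using S.part_first two three by blast
qed


end
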